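(* The $\Sigma_1$-theory $\mathcal{T}_\varsigma$ is stably finite, and thus has the finite model property, with respect to $\{\sigma\}$.
   Context: $\varsigma:\mathbb{N}\to\mathbb{N}$ is the Busy Beaver function: $\varsigma(n)$ is the maximum number of $1$'s that a halting Turing machine with at most $n$ states can leave on its tape, starting from an all-$0$ tape. $\Sigma_1$ is the empty signature (only equality, interpreted as identity) with one sort $\sigma$. Let $\psi_{\ge n}=\exists x_1\dots x_n.\bigwedge_{1\le i<j\le n}\neg(x_i=x_j)$, $\psi_{\le n}=\exists x_1\dots x_n\forall y.\bigvee_{i=1}^n y=x_i$, $\psi_{=n}=\psi_{\ge n}\wedge\psi_{\le n}$. $\mathcal{T}_\varsigma$ is the $\Sigma_1$-theory (class of all $\Sigma_1$-interpretations satisfying the axioms) axiomatized by $\{\psi_{\ge\varsigma(k+2)}\vee\bigvee_{i=2}^{k+2}\psi_{=\varsigma(i)}:k\in\mathbb{N}\}$. A theory $\mathcal{T}$ is stably finite w.r.t. $\{\sigma\}$ if for every quantifier-free $\phi$ and $\mathcal{T}$-interpretation $\mathcal{A}$ satisfying $\phi$ there is a $\mathcal{T}$-interpretation $\mathcal{B}$ satisfying $\phi$ with $|\sigma^{\mathcal{B}}|$ finite and $|\sigma^{\mathcal{B}}|\le|\sigma^{\mathcal{A}}|$. It has the finite model property w.r.t. $\{\sigma\}$ if every quantifier-free formula satisfied by some $\mathcal{T}$-interpretation is satisfied by some $\mathcal{T}$-interpretation with finite domain. *)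

theory Defs
  imports Main "HOL-Library.Equipollence"
begin

text \<open>A Turing machine with n states (states 0..n-1, start state 0) over the
alphabet {0,1} (False/True). The transition maps (state, read symbol) to
(symbol to write, move right?, next state) where None is the halting state.\<close>

type_synonym tm = "nat \<Rightarrow> bool \<Rightarrow> bool \<times> bool \<times> nat option"

definition tm_wf :: "nat \<Rightarrow> tm \<Rightarrow> bool" where
  "tm_wf n M \<longleftrightarrow> 0 < n \<and>
     (\<forall>q<n. \<forall>b q'. snd (snd (M q b)) = Some q' \<longrightarrow> q' < n)"

type_synonym config = "nat option \<times> (int \<Rightarrow> bool) \<times> int"

fun tm_step :: "tm \<Rightarrow> config \<Rightarrow> config" where
  "tm_step M (None, t, h) = (None, t, h)"
| "tm_step M (Some q, t, h) =
     (let (w, r, q') = M q (t h) in (q', t(h := w), if r then h + 1 else h - 1))"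

definition tm_run :: "tm \<Rightarrow> nat \<Rightarrow> config" where
  "tm_run M k = (tm_step M ^^ k) (Some 0, \<lambda>_. False, 0)"

definition halts_with :: "tm \<Rightarrow> nat \<Rightarrow> bool" where
  "halts_with M c \<longleftrightarrow> (\<exists>k. fst (tm_run M k) = None \<and>
       c = card {i. fst (snd (tm_run M k)) i})"

text \<open>Machines with fewer states embed into machines with exactly n states
(unused states), so "at most n states" = "state set {0..<n}".\<close>
definition busy_beaver :: "nat \<Rightarrow> nat" where
  "busy_beaver n = Sup {c. \<exists>M. tm_wf n M \<and> halts_with M c}"

datatype form = FTrue | FFalse | Eq nat nat | Neg form | Conj form form
  | Disj form form | Ex nat form | All nat form

fun sat :: "'a set \<Rightarrow> (nat \<Rightarrow> 'a) \<Rightarrow> form \<Rightarrow> bool" where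
  "sat D v FTrue = True"
| "sat D v FFalse = False"
| "sat D v (Eq x y) = (v x = v y)"
| "sat D v (Neg p) = (\<not> sat D v p)"
| "sat D v (Conj p q) = (sat D v p \<and> sat D v q)"
| "sat D v (Disj p q) = (sat D v p \<or> sat D v q)"
| "sat D v (Ex x p) = (\<exists>d\<in>D. sat D (v(x := d)) p)"
| "sat D v (All x p) = (\<forall>d\<in>D. sat D (v(x := d)) p)"

fun qfree :: "form \<Rightarrow> bool" where
  "qfree (Ex x p) = False"
| "qfree (All x p) = False"
| "qfree (Neg p) = qfree p"
| "qfree (Conj p q) = (qfree p \<and> qfree q)"
| "qfree (Disj p q) = (qfree p \<and> qfree q)"
| "qfree _ = True"

definition interp :: "'a set \<Rightarrow> (nat \<Rightarrow> 'a) \<Rightarrow> bool" where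
  "interp D v \<longleftrightarrow> D \<noteq> {} \<and> (\<forall>x. v x \<in> D)"

definition big_and :: "form list \<Rightarrow> form" where "big_and ps = foldr Conj ps FTrue"
definition big_or :: "form list \<Rightarrow> form" where "big_or ps = foldr Disj ps FFalse"
definition exs :: "nat list \<Rightarrow> form \<Rightarrow> form" where "exs xs p = foldr Ex xs p"

text \<open>Variables x_1..x_n are 1..n, y is 0.\<close>
definition psi_ge :: "nat \<Rightarrow> form" where
  "psi_ge n = exs [1..<n+1]
     (big_and [Neg (Eq i j). i \<leftarrow> [1..<n+1], j \<leftarrow> [1..<n+1], i < j])"

definition psi_le :: "nat \<Rightarrow> form" where
  "psi_le n = exs [1..<n+1] (All 0 (big_or [Eq 0 i. i \<leftarrow> [1..<n+1]]))"

definition psi_eq :: "nat \<Rightarrow> form" where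
  "psi_eq n = Conj (psi_ge n) (psi_le n)"

definition T_bb_axiom :: "nat \<Rightarrow> form" where
  "T_bb_axiom k = Disj (psi_ge (busy_beaver (k+2)))
      (big_or [psi_eq (busy_beaver i). i \<leftarrow> [2..<k+3]])"

definition T_bb_interp :: "'a set \<Rightarrow> (nat \<Rightarrow> 'a) \<Rightarrow> bool" where
  "T_bb_interp D v \<longleftrightarrow> interp D v \<and> (\<forall>k. sat D v (T_bb_axiom k))"

definition stably_finite :: "('a set \<Rightarrow> (nat \<Rightarrow> 'a) \<Rightarrow> bool) \<Rightarrow> bool" where
  "stably_finite T \<longleftrightarrow> (\<forall>\<phi> D v. qfree \<phi> \<and> T D v \<and> sat D v \<phi> \<longrightarrow>
      (\<exists>D' v'. T D' v' \<and> sat D' v' \<phi> \<and> finite D' \<and> D' \<lesssim> D))"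

definition finite_model_property :: "('a set \<Rightarrow> (nat \<Rightarrow> 'a) \<Rightarrow> bool) \<Rightarrow> bool" where
  "finite_model_property T \<longleftrightarrow> (\<forall>\<phi>. qfree \<phi> \<longrightarrow> (\<exists>D v. T D v \<and> sat D v \<phi>) \<longrightarrow>
      (\<exists>D' v'. T D' v' \<and> sat D' v' \<phi> \<and> finite D'))"

end

theory Submission
  imports Defs
begin

fun vars :: "form \<Rightarrow> nat set" where
  "vars (Eq x y) = {x, y}"
| "vars (Neg p) = vars p"
| "vars (Conj p q) = vars p \<union> vars q"
| "vars (Disj p q) = vars p \<union> vars q"
| "vars (Ex x p) = insert x (vars p)"
| "vars (All x p) = insert x (vars p)"
| "vars FTrue = {}"
| "vars FFalse = {}"

lemma finite_vars: "finite (vars p)"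
  by (induction p) auto

lemma sat_qfree_cong:
  "qfree p \<Longrightarrow> (\<forall>x\<in>vars p. v x = v' x) \<Longrightarrow> sat D v p = sat D' v' p"
  by (induction p) auto

lemma sat_big_and: "sat D v (big_and ps) = (\<forall>p\<in>set ps. sat D v p)"
  unfolding big_and_def by (induction ps) auto

lemma sat_big_or: "sat D v (big_or ps) = (\<exists>p\<in>set ps. sat D v p)"
  unfolding big_or_def by (induction ps) auto

lemma sat_exs:
  "(\<forall>x\<in>set xs. u x \<in> D) \<Longrightarrow> sat D (\<lambda>y. if y \<in> set xs then u y else v y) p
   \<Longrightarrow> sat D v (exs xs p)"
proof (induction xs arbitrary: v)
  case Nil
  then show ?case by (simp add: exs_def)
next
  case (Cons x xs)
  have e: "(\<lambda>y. if y \<in> set xs then u y else (v(x := u x)) y)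
         = (\<lambda>y. if y \<in> set (x # xs) then u y else v y)" by auto
  have s1: "sat D (\<lambda>y. if y \<in> set xs then u y else (v(x := u x)) y) p"
    unfolding e by (rule Cons.prems(2))
  have "sat D (v(x := u x)) (exs xs p)"
    by (rule Cons.IH[OF _ s1]) (use Cons.prems(1) in auto)
  then show ?case using Cons.prems(1) unfolding exs_def by (auto intro!: bexI[where x = "u x"])
qed

lemma mem_pairs:
  "p \<in> set (concat (map (\<lambda>i. concat (map (\<lambda>j. if i < j then [Neg (Eq i j)] else []) ys)) xs))
   \<Longrightarrow> \<exists>i\<in>set xs. \<exists>j\<in>set ys. i < j \<and> p = Neg (Eq i j)"
  by (auto split: if_splits)

lemma psi_ge_sat:
  assumes "finite D" "N \<le> card D"
  shows "sat D v (psi_ge N)"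
proof -
  obtain f where f: "f ` {1..<N+1} \<subseteq> D" "inj_on f {1..<N+1}"
    using card_le_inj[of "{1..<N+1}" D] assms by auto
  let ?w = "\<lambda>y. if y \<in> set [1..<N+1] then f y else v y"
  have "sat D ?w (big_and [Neg (Eq i j). i \<leftarrow> [1..<N+1], j \<leftarrow> [1..<N+1], i < j])"
    unfolding sat_big_and
  proof
    fix p assume "p \<in> set [Neg (Eq i j). i \<leftarrow> [1..<N+1], j \<leftarrow> [1..<N+1], i < j]"
    then obtain i j where ij: "i \<in> set [1..<N+1]" "j \<in> set [1..<N+1]" "i < j" "p = Neg (Eq i j)"
      by (auto split: if_splits)
    have "f i \<noteq> f j"
    proof
      assume "f i = f j"
      then have "i = j" by (rule inj_onD[OF f(2)]) (use ij in auto)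
      then show False using ij by simp
    qed
    then show "sat D ?w p" using ij by simp
  qed
  moreover have "\<forall>x\<in>set [1..<N+1]. f x \<in> D" using f(1) by auto
  ultimately show ?thesis unfolding psi_ge_def by (intro sat_exs[where u = f])
qed

lemma psi_eq_sat:
  assumes "finite D" "N = card D"
  shows "sat D v (psi_eq N)"
proof -
  obtain h where h: "bij_betw h {1..card D} D"
    using ex_bij_betw_nat_finite_1[OF assms(1)] by auto
  let ?w = "\<lambda>y. if y \<in> set [1..<N+1] then h y else v y"
  have "sat D ?w (All 0 (big_or [Eq 0 i. i \<leftarrow> [1..<N+1]]))"
  proof (simp only: sat.simps, intro ballI)
    fix d assume d: "d \<in> D"
    then obtain i where i: "i \<in> {1..card D}" "d = h i" using h
      by (metis bij_betw_imp_surj_on imageE)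
    have "sat D (?w(0 := d)) (Eq 0 i)" using i assms(2) by auto
    moreover have "Eq 0 i \<in> set [Eq 0 i. i \<leftarrow> [1..<N+1]]" using i assms(2) by auto
    ultimately show "sat D (?w(0 := d)) (big_or [Eq 0 i. i \<leftarrow> [1..<N+1]])"
      unfolding sat_big_or by blast
  qed
  moreover have "\<forall>x\<in>set [1..<N+1]. h x \<in> D" using h assms(2)
    by (auto simp: bij_betw_def)
  ultimately have le: "sat D v (psi_le N)" unfolding psi_le_def by (intro sat_exs[where u = h])
  show ?thesis using le psi_ge_sat[OF assms(1), of N v] assms(2)
    by (simp add: psi_eq_def)
qed

lemma good_exists:
  "\<exists>n\<ge>m. n \<ge> 1 \<and> (\<forall>k. busy_beaver (k+2) \<le> n \<or> (\<exists>i\<in>set [2..<k+3]. n = busy_beaver i))"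
proof (cases "\<exists>B. \<forall>i\<ge>2. busy_beaver i \<le> B")
  case True
  then obtain B where B: "\<forall>i\<ge>2. busy_beaver i \<le> B" by auto
  show ?thesis
    by (rule exI[where x = "max B (max m 1)"]) (auto intro: le_trans[OF B[rule_format]])
next
  case False
  then obtain i where i: "i \<ge> 2" "busy_beaver i > m" by (meson not_le)
  define M where "M = Max (busy_beaver ` {2..i})"
  have "M \<in> busy_beaver ` {2..i}" unfolding M_def using i by (intro Max_in) auto
  then obtain j where j: "j \<in> {2..i}" "busy_beaver j = M" by auto
  have mx: "\<And>l. l \<in> {2..i} \<Longrightarrow> busy_beaver l \<le> busy_beaver j"
    using j unfolding M_def by auto
  have ge: "busy_beaver j \<ge> busy_beaver i" using mx i by auto
  show ?thesis
  proof (rule exI[where x = "busy_beaver j"], intro conjI allI)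
    show "m \<le> busy_beaver j" using ge i by auto
    show "1 \<le> busy_beaver j" using ge i by auto
    fix k
    show "busy_beaver (k+2) \<le> busy_beaver j \<or> (\<exists>i'\<in>set [2..<k+3]. busy_beaver j = busy_beaver i')"
    proof (cases "k + 2 \<le> j")
      case True
      then show ?thesis using mx[of "k+2"] j by auto
    next
      case False
      then show ?thesis using j by (auto intro!: bexI[where x = j])
    qed
  qed
qed

lemma model_of_good:
  assumes "finite D" "interp D v" "1 \<le> card D"
    "\<forall>k. busy_beaver (k+2) \<le> card D \<or> (\<exists>i\<in>set [2..<k+3]. card D = busy_beaver i)"
  shows "T_bb_interp D v"
  unfolding T_bb_interp_def
proof (intro conjI allI)
  show "interp D v" by fact
  fix k
  from assms(4) have "busy_beaver (k+2) \<le> card D \<or> (\<exists>i\<in>set [2..<k+3]. card D = busy_beaver i)" by auto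
  then show "sat D v (T_bb_axiom k)"
  proof
    assume "busy_beaver (k+2) \<le> card D"
    then show ?thesis using psi_ge_sat[OF assms(1)] by (simp add: T_bb_axiom_def)
  next
    assume "\<exists>i\<in>set [2..<k+3]. card D = busy_beaver i"
    then obtain i where "i \<in> set [2..<k+3]" "card D = busy_beaver i" by auto
    then show ?thesis using psi_eq_sat[OF assms(1), of "busy_beaver i" v]
      by (auto simp: T_bb_axiom_def sat_big_or intro!: bexI[where x = "psi_eq (busy_beaver i)"])
  qed
qed

lemma sf: "stably_finite (T_bb_interp :: 'a set \<Rightarrow> (nat \<Rightarrow> 'a) \<Rightarrow> bool)"
  unfolding stably_finite_def
proof (intro allI impI)
  fix \<phi> and D :: "'a set" and v
  assume a: "qfree \<phi> \<and> T_bb_interp D v \<and> sat D v \<phi>"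
  show "\<exists>(D' :: 'a set) v'. T_bb_interp D' v' \<and> sat D' v' \<phi> \<and> finite D' \<and> D' \<lesssim> D"
  proof (cases "finite D")
    case True
    show ?thesis
      by (rule exI[where x = D], rule exI[where x = v]) (use a True lepoll_refl[of D] in simp)
  next
    case False
    define A where "A = v ` vars \<phi>"
    have fA: "finite A" unfolding A_def using finite_vars by auto
    have AD: "A \<subseteq> D" using a unfolding A_def T_bb_interp_def interp_def by auto
    obtain n where n: "n \<ge> card A" "n \<ge> 1"
      "\<forall>k. busy_beaver (k+2) \<le> n \<or> (\<exists>i\<in>set [2..<k+3]. n = busy_beaver i)"
      using good_exists[of "card A"] by auto
    have "infinite (D - A)" using False fA by (simp add: Diff_infinite_finite)
    then obtain B where B: "finite B" "card B = n - card A" "B \<subseteq> D - A"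
      using infinite_arbitrarily_large by blast
    define D' where "D' = A \<union> B"
    have fD': "finite D'" using fA B unfolding D'_def by auto
    have cD': "card D' = n" unfolding D'_def using B fA n
      by (subst card_Un_disjoint) auto
    have sub: "D' \<subseteq> D" using AD B unfolding D'_def by auto
    have ne: "D' \<noteq> {}" using cD' n by auto
    then obtain d0 where d0: "d0 \<in> D'" by auto
    define v' where "v' = (\<lambda>x. if x \<in> vars \<phi> then v x else d0)"
    have iv: "interp D' v'" unfolding interp_def v'_def D'_def using ne d0
      by (auto simp: A_def D'_def)
    have "sat D' v' \<phi>" using a sat_qfree_cong[of \<phi> v v' D D'] by (auto simp: v'_def)
    moreover have "T_bb_interp D' v'" using model_of_good[OF fD' iv] cD' n by auto
    ultimately show ?thesis using fD' sub subset_imp_lepoll by blast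
  qed
qed

theorem lemma52:
  shows "stably_finite (T_bb_interp :: 'a set \<Rightarrow> (nat \<Rightarrow> 'a) \<Rightarrow> bool)
       \<and> finite_model_property (T_bb_interp :: 'a set \<Rightarrow> (nat \<Rightarrow> 'a) \<Rightarrow> bool)"
  using sf unfolding stably_finite_def finite_model_property_def by blast

end
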